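(* The locus of the Nagel point $X_8$ (triangle center function $h=\dfrac{s_2+s_3-s_1}{s_1}$) over the 3-periodics of $E$ is the ellipse $x^2/a_8^2+y^2/b_8^2=1$ with $a_8=\dfrac{(b^2-\delta)^2}{a\,c^2}$, $b_8=\dfrac{(a^2-\delta)^2}{b\,c^2}$.
   Context: Fix real numbers $a>b>0$, let $E$ be the ellipse $x^2/a^2+y^2/b^2=1$, $c^2=a^2-b^2$ and $\delta=\sqrt{a^4-a^2b^2+b^4}$. A 3-periodic is a non-degenerate triangle $P_1P_2P_3$ with all vertices on $E$ such that at each vertex $P_j$ the normal line to $E$ at $P_j$ bisects the interior angle of the triangle at $P_j$. For a triangle let $s_1=|P_2P_3|$, $s_2=|P_3P_1|$, $s_3=|P_1P_2|$. Given a triangle center function $h(s_1,s_2,s_3)$, the center $X_h$ is the point with trilinears $p:q:r=h(s_1,s_2,s_3):h(s_2,s_3,s_1):h(s_3,s_1,s_2)$, i.e. the Cartesian point $\dfrac{p s_1P_1+q s_2P_2+r s_3P_3}{p s_1+q s_2+r s_3}$. The locus of $X_h$ is the set of points $X_h(T)$ over all 3-periodics $T$. *)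

theory Defs
  imports "HOL-Analysis.Analysis"
begin

type_synonym pt = "real \<times> real"

definition on_ellipse :: "real \<Rightarrow> real \<Rightarrow> pt \<Rightarrow> bool" where
  "on_ellipse a b P \<longleftrightarrow> (fst P)^2 / a^2 + (snd P)^2 / b^2 = 1"

definition det2 :: "pt \<Rightarrow> pt \<Rightarrow> real" where
  "det2 u v = fst u * snd v - snd u * fst v"

text \<open>The normal line to the ellipse at P (direction (x/a^2, y/b^2)) bisects the interior
  angle at P of triangle P Q R: the normal direction is parallel to the interior angle
  bisector direction (Q-P)/|Q-P| + (R-P)/|R-P|.\<close>
definition normal_bisects :: "real \<Rightarrow> real \<Rightarrow> pt \<Rightarrow> pt \<Rightarrow> pt \<Rightarrow> bool" where
  "normal_bisects a b P Q R \<longleftrightarrow>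
     (let n = (fst P / a^2, snd P / b^2);
          w = (1 / dist Q P) *\<^sub>R (Q - P) + (1 / dist R P) *\<^sub>R (R - P)
      in det2 n w = 0)"

definition three_periodic :: "real \<Rightarrow> real \<Rightarrow> pt \<Rightarrow> pt \<Rightarrow> pt \<Rightarrow> bool" where
  "three_periodic a b P1 P2 P3 \<longleftrightarrow>
     on_ellipse a b P1 \<and> on_ellipse a b P2 \<and> on_ellipse a b P3 \<and>
     det2 (P2 - P1) (P3 - P1) \<noteq> 0 \<and>
     normal_bisects a b P1 P2 P3 \<and> normal_bisects a b P2 P3 P1 \<and> normal_bisects a b P3 P1 P2"

text \<open>Triangle center with trilinears h(s1,s2,s3):h(s2,s3,s1):h(s3,s1,s2).\<close>
definition tri_center :: "(real \<Rightarrow> real \<Rightarrow> real \<Rightarrow> real) \<Rightarrow> pt \<Rightarrow> pt \<Rightarrow> pt \<Rightarrow> pt" where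
  "tri_center h P1 P2 P3 =
     (let s1 = dist P2 P3; s2 = dist P3 P1; s3 = dist P1 P2;
          p = h s1 s2 s3; q = h s2 s3 s1; r = h s3 s1 s2
      in (1 / (p * s1 + q * s2 + r * s3)) *\<^sub>R
           ((p * s1) *\<^sub>R P1 + (q * s2) *\<^sub>R P2 + (r * s3) *\<^sub>R P3))"

definition locus :: "real \<Rightarrow> real \<Rightarrow> (real \<Rightarrow> real \<Rightarrow> real \<Rightarrow> real) \<Rightarrow> pt set" where
  "locus a b h = {tri_center h P1 P2 P3 | P1 P2 P3. three_periodic a b P1 P2 P3}"

definition nagel_h :: "real \<Rightarrow> real \<Rightarrow> real \<Rightarrow> real" where
  "nagel_h s1 s2 s3 = (s2 + s3 - s1) / s1"

end

theory Submission
  imports Defs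
begin


lemma chord_id:
  fixes a b p q p' q' :: real
  assumes "p^2+q^2=1" "p'^2+q'^2=1"
  shows "(a*p-a*p')^2+(b*q-b*q')^2 = (1-p*p'-q*q')*(a^2+b^2-(a^2-b^2)*(p*p'-q*q'))"
  using assms by algebra


lemma numx:
  fixes p q e C N g :: real
  assumes "p^2+q^2=1" "2*C = e^2-1" "N = (1-e)^2*p^2+(1+e)^2*q^2" "g = (1-e)*p^2+(1+e)*q^2"
  shows "(2*C*(C-g)*p*N + 4*C*(N-C^2)*(1-e)*p - 8*e*(N-C^2)*(1+e)*p*q^2)*((e-3)*(4*e*p^2-(1+e)^2))
    = e*(e+1)*p*(4*p^2+(e+1)*(e-3)) * (2*N*(2*N-C*g-C^2))"
  using assms by algebra

lemma numy:
  fixes p q e C N g :: real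
  assumes "p^2+q^2=1" "2*C = e^2-1" "N = (1-e)^2*p^2+(1+e)^2*q^2" "g = (1-e)*p^2+(1+e)*q^2"
  shows "(2*C*(C-g)*q*N + 4*C*(N-C^2)*(1+e)*q + 8*e*(N-C^2)*(1-e)*p^2*q)*((e+3)*(4*e*p^2-(1+e)^2))
    = e*(e-1)*q*(4*p^2-(1+e)^2) * (2*N*(2*N-C*g-C^2))"
  using assms by algebra

lemma core:
  fixes p q e r N C :: real
  assumes pq: "p^2+q^2=1" and Cdef: "C = (e^2-1)/2" and Ndef: "N = (1-e)^2*p^2+(1+e)^2*q^2"
    and r: "r^2 = N - C^2" and e0: "0 < e" and e1: "e < 1"
  defines "p2 \<equiv> (C*(1-e)*p - r*(1+e)*q)/N" and "q2 \<equiv> (C*(1+e)*q + r*(1-e)*p)/N"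
      and "p3 \<equiv> (C*(1-e)*p + r*(1+e)*q)/N" and "q3 \<equiv> (C*(1+e)*q - r*(1-e)*p)/N"
  defines "m12 \<equiv> 1 - p*p2 - q*q2" and "m13 \<equiv> 1 - p*p3 - q*q3" and "m23 \<equiv> 1 - p2*p3 - q2*q3"
  shows "((m12+m13-m23)*p + (m12+m23-m13)*p2 + (m13+m23-m12)*p3)/(m12+m13+m23)
           = e*(e+1)*p*(4*p^2+(e+1)*(e-3))/((e-3)*(4*e*p^2-(1+e)^2))"
    and "((m12+m13-m23)*q + (m12+m23-m13)*q2 + (m13+m23-m12)*q3)/(m12+m13+m23)
           = e*(e-1)*q*(4*p^2-(1+e)^2)/((e+3)*(4*e*p^2-(1+e)^2))"
    and "m12+m13+m23 = (9-e^2)/2"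
proof -
  define g where "g = (1-e)*p^2+(1+e)*q^2"
  define P2 where "P2 = C*(1-e)*p - r*(1+e)*q"
  define Q2 where "Q2 = C*(1+e)*q + r*(1-e)*p"
  define P3 where "P3 = C*(1-e)*p + r*(1+e)*q"
  define Q3 where "Q3 = C*(1+e)*q - r*(1-e)*p"
  have Nalt: "N = (1+e)^2 - 4*e*p^2" using pq unfolding Ndef by algebra
  have p2le: "p^2 \<le> 1" using pq by (metis add_le_cancel_left add.right_neutral zero_le_power2)
  have "N \<ge> (1-e)^2" unfolding Nalt using p2le e0 by (simp add: power2_eq_square algebra_simps)
  hence Npos: "N > 0" using e1 by (smt (verit) zero_less_power2)
  have i12: "p*P2+q*Q2 = C*g - 2*e*r*p*q" unfolding P2_def Q2_def g_def by algebra
  have i13: "p*P3+q*Q3 = C*g + 2*e*r*p*q" unfolding P3_def Q3_def g_def by algebra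
  have i23: "P2*P3+Q2*Q3 = (C^2-r^2)*N" unfolding P2_def Q2_def P3_def Q3_def Ndef by algebra
  have e2: "p2 = P2/N" "q2 = Q2/N" "p3 = P3/N" "q3 = Q3/N"
    unfolding p2_def P2_def q2_def Q2_def p3_def P3_def q3_def Q3_def by auto
  have m12: "m12 = (N - C*g + 2*e*r*p*q)/N"
  proof -
    have "m12 = 1 - (p*P2+q*Q2)/N" unfolding m12_def e2 by (simp add: add_divide_distrib)
    thus ?thesis unfolding i12 using Npos by (simp add: field_simps)
  qed
  have m13: "m13 = (N - C*g - 2*e*r*p*q)/N"
  proof -
    have "m13 = 1 - (p*P3+q*Q3)/N" unfolding m13_def e2 by (simp add: add_divide_distrib)
    thus ?thesis unfolding i13 using Npos by (simp add: field_simps)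
  qed
  have m23: "m23 = 2*r^2/N"
  proof -
    have "m23 = 1 - (P2*P3+Q2*Q3)/N^2" unfolding m23_def e2 by (simp add: add_divide_distrib power2_eq_square)
    also have "\<dots> = 1 - (C^2-r^2)/N" unfolding i23 using Npos by (simp add: power2_eq_square)
    also have "\<dots> = (N - C^2 + r^2)/N" using Npos by (simp add: field_simps)
    finally show ?thesis using r by simp
  qed
  have C2: "2*C = e^2-1" unfolding Cdef by simp
  have key4: "4*(2*N - C*g - C^2) = (9-e^2)*N" using pq C2 unfolding Ndef g_def by algebra
  have key: "2*N - C*g - C^2 = (9-e^2)*N/4" using key4 by simp
  show S: "m12+m13+m23 = (9-e^2)/2"
  proof -
    have "m12+m13+m23 = (2*N - 2*C*g + 2*r^2)/N" unfolding m12 m13 m23 using Npos by (simp add: field_simps)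
    also have "\<dots> = 2*(2*N - C*g - C^2)/N" using r by (simp add: algebra_simps)
    also have "\<dots> = (9-e^2)/2" unfolding key using Npos by (simp add: field_simps)
    finally show ?thesis .
  qed
  have Nne: "4*e*p^2-(1+e)^2 = -N" unfolding Nalt by simp
  have "e^2 < 1" using e0 e1 by (simp add: power_less_one_iff)
  hence e9: "9 - e^2 > 0" by simp
  have wx: "(2*r^2 + 4*e*r*p*q)*P2 + (2*r^2 - 4*e*r*p*q)*P3 = 4*C*r^2*(1-e)*p - 8*e*r^2*(1+e)*p*q^2"
    unfolding P2_def P3_def by algebra
  have wy: "(2*r^2 + 4*e*r*p*q)*Q2 + (2*r^2 - 4*e*r*p*q)*Q3 = 4*C*r^2*(1+e)*q + 8*e*r^2*(1-e)*p^2*q"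
    unfolding Q2_def Q3_def by algebra
  have sx: "N^2*((m12+m13-m23)*p + (m12+m23-m13)*p2 + (m13+m23-m12)*p3)
     = (2*(N - C*g) - 2*r^2)*p*N + ((2*r^2 + 4*e*r*p*q)*P2 + (2*r^2 - 4*e*r*p*q)*P3)"
    unfolding m12 m13 m23 e2 using Npos by (simp add: field_simps power2_eq_square)
  have sy: "N^2*((m12+m13-m23)*q + (m12+m23-m13)*q2 + (m13+m23-m12)*q3)
     = (2*(N - C*g) - 2*r^2)*q*N + ((2*r^2 + 4*e*r*p*q)*Q2 + (2*r^2 - 4*e*r*p*q)*Q3)"
    unfolding m12 m13 m23 e2 using Npos by (simp add: field_simps power2_eq_square)
  have sx2: "N^2*((m12+m13-m23)*p + (m12+m23-m13)*p2 + (m13+m23-m12)*p3)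
     = 2*C*(C-g)*p*N + 4*C*(N-C^2)*(1-e)*p - 8*e*(N-C^2)*(1+e)*p*q^2"
    unfolding sx wx using r by algebra
  have sy2: "N^2*((m12+m13-m23)*q + (m12+m23-m13)*q2 + (m13+m23-m12)*q3)
     = 2*C*(C-g)*q*N + 4*C*(N-C^2)*(1+e)*q + 8*e*(N-C^2)*(1-e)*p^2*q"
    unfolding sy wy using r by algebra
  have D: "2*N*(2*N-C*g-C^2) = (9-e^2)/2 * N^2" unfolding key by (simp add: power2_eq_square)
  have nx: "(N^2*((m12+m13-m23)*p + (m12+m23-m13)*p2 + (m13+m23-m12)*p3))*((e-3)*(4*e*p^2-(1+e)^2))
      = e*(e+1)*p*(4*p^2+(e+1)*(e-3)) * ((9-e^2)/2 * N^2)"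
    unfolding sx2 D[symmetric] by (rule numx[OF pq C2 Ndef g_def])
  have ny: "(N^2*((m12+m13-m23)*q + (m12+m23-m13)*q2 + (m13+m23-m12)*q3))*((e+3)*(4*e*p^2-(1+e)^2))
      = e*(e-1)*q*(4*p^2-(1+e)^2) * ((9-e^2)/2 * N^2)"
    unfolding sy2 D[symmetric] by (rule numy[OF pq C2 Ndef g_def])
  define Tx where "Tx = (m12+m13-m23)*p + (m12+m23-m13)*p2 + (m13+m23-m12)*p3"
  define Ty where "Ty = (m12+m13-m23)*q + (m12+m23-m13)*q2 + (m13+m23-m12)*q3"
  define Fx where "Fx = e*(e+1)*p*(4*p^2+(e+1)*(e-3))"
  define Fy where "Fy = e*(e-1)*q*(4*p^2-(1+e)^2)"
  have N2: "N^2 \<noteq> 0" using Npos by simp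
  have nx': "N^2 * (Tx*((e-3)*(-N))) = N^2 * (Fx*((9-e^2)/2))"
    using nx[folded Tx_def Fx_def] unfolding Nne by (simp add: ac_simps)
  have ny': "N^2 * (Ty*((e+3)*(-N))) = N^2 * (Fy*((9-e^2)/2))"
    using ny[folded Ty_def Fy_def] unfolding Nne by (simp add: ac_simps)
  have tx: "Tx*((e-3)*(-N)) = Fx*((9-e^2)/2)" using nx' N2 mult_cancel_left by blast
  have ty: "Ty*((e+3)*(-N)) = Fy*((9-e^2)/2)" using ny' N2 mult_cancel_left by blast
  have ne1: "(e-3)*(-N) \<noteq> 0" "(e+3)*(-N) \<noteq> 0" "(9-e^2)/2 \<noteq> 0" using Npos e1 e0 e9 by auto
  show "((m12+m13-m23)*p + (m12+m23-m13)*p2 + (m13+m23-m12)*p3)/(m12+m13+m23)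
           = e*(e+1)*p*(4*p^2+(e+1)*(e-3))/((e-3)*(4*e*p^2-(1+e)^2))"
    unfolding S Nne Tx_def[symmetric] Fx_def[symmetric] using tx ne1
    by (simp add: divide_simps)
  show "((m12+m13-m23)*q + (m12+m23-m13)*q2 + (m13+m23-m12)*q3)/(m12+m13+m23)
           = e*(e-1)*q*(4*p^2-(1+e)^2)/((e+3)*(4*e*p^2-(1+e)^2))"
    unfolding S Nne Ty_def[symmetric] Fy_def[symmetric] using ty ne1
    by (simp add: divide_simps)
qed



lemma E_factor:
  fixes p q e C :: real
  assumes "p^2+q^2=1"
  shows "C^2*((1-e)^3*p^2+(1+e)^3*q^2) - (((1-e)^2*p^2+(1+e)^2*q^2)-C^2)*(1-e)*(1+e)*((1-e)*p^2+(1+e)*q^2)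
     - C*((1-e)^2*p^2+(1+e)^2*q^2)^2
    = (e^2-1-2*C)*((1-e)^2*p^2+(1+e)^2*q^2)*(e+1-C-2*e*p^2)"
  using assms by algebra

lemma decomp:
  fixes p q x y e C :: real
  assumes "N = ((1-e)*p)^2+((1+e)*q)^2" "(1-e)*p*x+(1+e)*q*y = C"
  shows "N*x = C*((1-e)*p) + (-(1+e)*q*x+(1-e)*p*y)*(-(1+e)*q)"
    and "N*y = C*((1+e)*q) + (-(1+e)*q*x+(1-e)*p*y)*((1-e)*p)"
  using assms by algebra+

lemma pair_G:
  fixes p q x2 y2 x3 y3 e C N :: real
  assumes N: "N = ((1-e)*p)^2+((1+e)*q)^2" and Npos: "N > 0"
    and u2: "x2^2+y2^2=1" and u3: "x3^2+y3^2=1" and d: "(x2,y2) \<noteq> (x3,y3)"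
    and l2: "(1-e)*p*x2+(1+e)*q*y2 = C" and l3: "(1-e)*p*x3+(1+e)*q*y3 = C"
  shows "((1-e)*x2*x3+(1+e)*y2*y3)*N^2 = C^2*((1-e)^3*p^2+(1+e)^3*q^2) - (N-C^2)*(1-e)*(1+e)*((1-e)*p^2+(1+e)*q^2)"
    and "\<exists>r. r^2 = N - C^2 \<and> x2 = (C*(1-e)*p - r*(1+e)*q)/N \<and> y2 = (C*(1+e)*q + r*(1-e)*p)/N
                \<and> x3 = (C*(1-e)*p + r*(1+e)*q)/N \<and> y3 = (C*(1+e)*q - r*(1-e)*p)/N"
proof -
  define r2 where "r2 = -(1+e)*q*x2+(1-e)*p*y2"
  define r3 where "r3 = -(1+e)*q*x3+(1-e)*p*y3"
  note d2 = decomp[OF N l2, folded r2_def]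
  note d3 = decomp[OF N l3, folded r3_def]
  have "N^2*(x2^2+y2^2) = (C^2 + r2^2)*N" using d2 N by (simp add: power2_eq_square) algebra
  hence "N*N = (C^2 + r2^2)*N" using u2 by (simp add: power2_eq_square)
  hence "N = C^2 + r2^2" using Npos by simp
  hence rr2: "r2^2 = N - C^2" by simp
  have "N^2*(x3^2+y3^2) = (C^2 + r3^2)*N" using d3 N by (simp add: power2_eq_square) algebra
  hence "N*N = (C^2 + r3^2)*N" using u3 by (simp add: power2_eq_square)
  hence "N = C^2 + r3^2" using Npos by simp
  hence rr3: "r3^2 = N - C^2" by simp
  have "r3 \<noteq> r2"
  proof
    assume "r3 = r2"
    hence "N*x2 = N*x3" "N*y2 = N*y3" using d2 d3 by auto
    thus False using d Npos by auto
  qed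
  hence r3: "r3 = -r2" using rr2 rr3 by (metis power2_eq_iff)
  have X2: "x2 = (C*(1-e)*p - r2*(1+e)*q)/N" "y2 = (C*(1+e)*q + r2*(1-e)*p)/N"
    using d2 Npos by (simp_all add: field_simps)
  have X3: "x3 = (C*(1-e)*p + r2*(1+e)*q)/N" "y3 = (C*(1+e)*q - r2*(1-e)*p)/N"
    using d3 Npos unfolding r3 by (simp_all add: field_simps)
  show "\<exists>r. r^2 = N - C^2 \<and> x2 = (C*(1-e)*p - r*(1+e)*q)/N \<and> y2 = (C*(1+e)*q + r*(1-e)*p)/N
                \<and> x3 = (C*(1-e)*p + r*(1+e)*q)/N \<and> y3 = (C*(1+e)*q - r*(1-e)*p)/N"
    using rr2 X2 X3 by blast
  have "((1-e)*x2*x3+(1+e)*y2*y3)*N^2 = (1-e)*(N*x2)*(N*x3)+(1+e)*(N*y2)*(N*y3)"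
    by (simp add: power2_eq_square algebra_simps)
  also have "\<dots> = C^2*((1-e)^3*p^2+(1+e)^3*q^2) - r2^2*(1-e)*(1+e)*((1-e)*p^2+(1+e)*q^2)"
    unfolding d2 d3 r3 by algebra
  finally show "((1-e)*x2*x3+(1+e)*y2*y3)*N^2 = C^2*((1-e)^3*p^2+(1+e)^3*q^2) - (N-C^2)*(1-e)*(1+e)*((1-e)*p^2+(1+e)*q^2)"
    unfolding rr2 .
qed

lemma vertex_eq:
  fixes p q x2 y2 x3 y3 e C :: real
  assumes u1: "p^2+q^2=1" and u2: "x2^2+y2^2=1" and u3: "x3^2+y3^2=1" and d: "(x2,y2) \<noteq> (x3,y3)"
    and l2: "(1-e)*p*x2+(1+e)*q*y2 = C" and l3: "(1-e)*p*x3+(1+e)*q*y3 = C"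
    and l23: "(1-e)*x2*x3+(1+e)*y2*y3 = C" and e0: "e > 0" and eC: "1-e > C"
  shows "(e^2-1-2*C)*(e+1-C-2*e*p^2) = 0"
proof -
  define N where "N = ((1-e)*p)^2+((1+e)*q)^2"
  have Npos: "N > 0"
  proof (rule ccontr)
    assume "\<not> N > 0"
    moreover have "N \<ge> 0" unfolding N_def by simp
    ultimately have "N = 0" by linarith
    hence a: "(1-e)*p = 0" "(1+e)*q = 0" unfolding N_def by (simp_all add: sum_power2_eq_zero_iff)
    hence "C = 0" using l2 by (metis add.right_neutral mult_zero_left)
    hence "p = 0" using a eC by simp
    moreover have "q = 0" using a e0 by simp
    ultimately show False using u1 by simp
  qed
  have "C*N^2 = C^2*((1-e)^3*p^2+(1+e)^3*q^2) - (N-C^2)*(1-e)*(1+e)*((1-e)*p^2+(1+e)*q^2)"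
    using pair_G(1)[OF N_def Npos u2 u3 d l2 l3] l23 by simp
  moreover have Nd: "(1-e)^2*p^2+(1+e)^2*q^2 = N" unfolding N_def by (simp add: power_mult_distrib)
  moreover note E_factor[OF u1, where e=e and C=C, unfolded Nd]
  ultimately have "(e^2-1-2*C)*N*(e+1-C-2*e*p^2) = 0" by linarith
  thus ?thesis using Npos by simp
qed

lemma antipodal_contra:
  fixes p q x y x3 y3 e C :: real
  assumes u1: "p^2+q^2=1" and ap: "x = -p" "y = -q"
    and l2: "(1-e)*p*x+(1+e)*q*y = C" and l3: "(1-e)*p*x3+(1+e)*q*y3 = C"
    and l23: "(1-e)*x*x3+(1+e)*y*y3 = C" and e0: "e > 0" and eC: "1-e > C"
  shows False
proof -
  have "C = 0" using l3 l23 ap by (simp add: algebra_simps)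
  hence "(1-e)*p^2+(1+e)*q^2 = 0" using l2 ap by (simp add: power2_eq_square algebra_simps)
  moreover have "(1-e)*p^2+(1+e)*q^2 > 0"
  proof -
    have "(1-e)*q^2 \<le> (1+e)*q^2" using e0 by (intro mult_right_mono) auto
    hence "(1-e)*p^2+(1-e)*q^2 \<le> (1-e)*p^2+(1+e)*q^2" by linarith
    moreover have "(1-e)*p^2+(1-e)*q^2 = 1-e" by (metis u1 distrib_left mult.right_neutral)
    ultimately show ?thesis using eC \<open>C = 0\<close> by simp
  qed
  ultimately show False by simp
qed

lemma closure_forced:
  fixes p1 q1 p2 q2 p3 q3 e C :: real
  assumes u1: "p1^2+q1^2=1" and u2: "p2^2+q2^2=1" and u3: "p3^2+q3^2=1"
    and d12: "(p1,q1) \<noteq> (p2,q2)" and d13: "(p1,q1) \<noteq> (p3,q3)" and d23: "(p2,q2) \<noteq> (p3,q3)"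
    and g12: "(1-e)*p1*p2+(1+e)*q1*q2 = C" and g13: "(1-e)*p1*p3+(1+e)*q1*q3 = C"
    and g23: "(1-e)*p2*p3+(1+e)*q2*q3 = C" and e0: "e > 0" and eC: "1-e > C"
  shows "e^2 = 1+2*C"
proof (rule ccontr)
  assume ne: "e^2 \<noteq> 1+2*C"
  have g21: "(1-e)*p2*p1+(1+e)*q2*q1 = C" using g12 by (simp add: algebra_simps)
  have g31: "(1-e)*p3*p1+(1+e)*q3*q1 = C" using g13 by (simp add: algebra_simps)
  have g32: "(1-e)*p3*p2+(1+e)*q3*q2 = C" using g23 by (simp add: algebra_simps)
  have v1: "e+1-C-2*e*p1^2 = 0" using vertex_eq[OF u1 u2 u3 d23 g12 g13 g23 e0 eC] ne by simp
  have v2: "e+1-C-2*e*p2^2 = 0" using vertex_eq[OF u2 u1 u3 d13 g21 g23 g13 e0 eC] ne by simp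
  have v3: "e+1-C-2*e*p3^2 = 0" using vertex_eq[OF u3 u1 u2 d12 g31 g32 g12 e0 eC] ne by simp
  have s2: "p2^2 = p1^2" using v1 v2 e0 by simp
  have s3: "p3^2 = p1^2" using v1 v3 e0 by simp
  have t2: "q2^2 = q1^2" using u1 u2 s2 by simp
  have t3: "q3^2 = q1^2" using u1 u3 s3 by simp
  have P2: "p2 = p1 \<or> p2 = -p1" using s2 by (simp add: power2_eq_iff)
  have P3: "p3 = p1 \<or> p3 = -p1" using s3 by (simp add: power2_eq_iff)
  have Q2: "q2 = q1 \<or> q2 = -q1" using t2 by (simp add: power2_eq_iff)
  have Q3: "q3 = q1 \<or> q3 = -q1" using t3 by (simp add: power2_eq_iff)
  have "(p2 = -p1 \<and> q2 = -q1) \<or> (p3 = -p1 \<and> q3 = -q1) \<or> (p3 = -p2 \<and> q3 = -q2)"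
    using P2 P3 Q2 Q3 d12 d13 d23 by auto
  thus False
  proof (elim disjE conjE)
    assume "p2 = -p1" "q2 = -q1" thus False using antipodal_contra[OF u1 _ _ g12 g13 g23 e0 eC] by simp
  next
    assume "p3 = -p1" "q3 = -q1" thus False using antipodal_contra[OF u1 _ _ g13 g12 g32 e0 eC] by simp
  next
    assume "p3 = -p2" "q3 = -q2" thus False using antipodal_contra[OF u2 _ _ g23 g21 g31 e0 eC] by simp
  qed
qed



lemma det_circle:
  fixes x1 y1 x2 y2 x3 y3 :: real
  assumes "x1^2+y1^2=1" "x2^2+y2^2=1" "x3^2+y3^2=1"
  shows "4*((x2-x1)*(y3-y1)-(y2-y1)*(x3-x1))^2 = ((x1-x2)^2+(y1-y2)^2)*((x1-x3)^2+(y1-y3)^2)*((x2-x3)^2+(y2-y3)^2)"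
  using assms by algebra

lemma det_circle_ne:
  fixes x1 y1 x2 y2 x3 y3 :: real
  assumes "x1^2+y1^2=1" "x2^2+y2^2=1" "x3^2+y3^2=1"
    and "(x1,y1)\<noteq>(x2,y2)" "(x1,y1)\<noteq>(x3,y3)" "(x2,y2)\<noteq>(x3,y3)"
  shows "(x2-x1)*(y3-y1)-(y2-y1)*(x3-x1) \<noteq> 0"
proof
  assume "(x2-x1)*(y3-y1)-(y2-y1)*(x3-x1) = 0"
  hence "((x1-x2)^2+(y1-y2)^2)*((x1-x3)^2+(y1-y3)^2)*((x2-x3)^2+(y2-y3)^2) = 0"
    using det_circle[OF assms(1-3)] by simp
  moreover have "(x1-x2)^2+(y1-y2)^2 \<noteq> 0" "(x1-x3)^2+(y1-y3)^2 \<noteq> 0" "(x2-x3)^2+(y2-y3)^2 \<noteq> 0"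
    using assms(4-6) by (auto simp: sum_power2_eq_zero_iff)
  ultimately show False by (metis mult_eq_0_iff)
qed

lemma bis_fwd:
  fixes na nb ua ub ra rb :: real
  assumes "na*(ub+rb) - nb*(ua+ra) = 0" "ua^2+ub^2=1" "ra^2+rb^2=1" "(ua+ra,ub+rb) \<noteq> (0,0)"
  shows "na*ua+nb*ub = na*ra+nb*rb"
proof -
  have wd: "(ua+ra)*(ua-ra)+(ub+rb)*(ub-rb) = 0" using assms(2,3) by algebra
  have "(na*(ua-ra)+nb*(ub-rb))*(ua+ra) = 0" "(na*(ua-ra)+nb*(ub-rb))*(ub+rb) = 0"
    using assms(1) wd by algebra+
  hence "na*(ua-ra)+nb*(ub-rb) = 0" using assms(4) by auto
  thus ?thesis by (simp add: algebra_simps)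
qed

lemma bis_bwd:
  fixes na nb ua ub ra rb :: real
  assumes "na*ua+nb*ub = na*ra+nb*rb" "ua^2+ub^2=1" "ra^2+rb^2=1" "(ua,ub) \<noteq> (ra,rb)"
  shows "na*(ub+rb) - nb*(ua+ra) = 0"
proof -
  have wd: "(ua+ra)*(ua-ra)+(ub+rb)*(ub-rb) = 0" using assms(2,3) by algebra
  have "(na*(ub+rb) - nb*(ua+ra))*(ua-ra) = 0" "(na*(ub+rb) - nb*(ua+ra))*(ub-rb) = 0"
    using assms(1) wd by algebra+
  thus ?thesis using assms(4) by auto
qed

lemma dist_sq: "(dist (x2::real,y2::real) (x,y))^2 = (x2-x)^2+(y2-y)^2"
  by (simp add: dist_Pair_Pair dist_real_def)

lemma nb_iff:
  fixes a b x y x2 y2 x3 y3 :: real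
  assumes a: "a > 0" and b: "b > 0" and E: "on_ellipse a b (x,y)"
    and ncol: "(x2-x)*(y3-y)-(y2-y)*(x3-x) \<noteq> 0"
  shows "normal_bisects a b (x,y) (x2,y2) (x3,y3) \<longleftrightarrow>
     (1 - x*x2/a^2 - y*y2/b^2)/dist (x2,y2) (x,y) = (1 - x*x3/a^2 - y*y3/b^2)/dist (x3,y3) (x,y)"
proof -
  define dQ where "dQ = dist (x2,y2) (x,y)"
  define dR where "dR = dist (x3,y3) (x,y)"
  have dQ2: "dQ^2 = (x2-x)^2+(y2-y)^2" unfolding dQ_def by (rule dist_sq)
  have dR2: "dR^2 = (x3-x)^2+(y3-y)^2" unfolding dR_def by (rule dist_sq)
  have "(x2,y2) \<noteq> (x,y)" using ncol by auto
  hence dQp: "dQ > 0" unfolding dQ_def by simp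
  have "(x3,y3) \<noteq> (x,y)" using ncol by auto
  hence dRp: "dR > 0" unfolding dR_def by simp
  define ua where "ua = (x2-x)/dQ"
  define ub where "ub = (y2-y)/dQ"
  define ra where "ra = (x3-x)/dR"
  define rb where "rb = (y3-y)/dR"
  have "ua^2+ub^2 = ((x2-x)^2+(y2-y)^2)/dQ^2" unfolding ua_def ub_def by (simp add: power_divide add_divide_distrib)
  hence uu: "ua^2+ub^2 = 1" unfolding dQ2[symmetric] using dQp by simp
  have "ra^2+rb^2 = ((x3-x)^2+(y3-y)^2)/dR^2" unfolding ra_def rb_def by (simp add: power_divide add_divide_distrib)
  hence rr: "ra^2+rb^2 = 1" unfolding dR2[symmetric] using dRp by simp
  have det: "ua*rb - ub*ra = ((x2-x)*(y3-y)-(y2-y)*(x3-x))/(dQ*dR)"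
    unfolding ua_def ub_def ra_def rb_def using dQp dRp by (simp add: field_simps)
  have detne: "ua*rb - ub*ra \<noteq> 0" unfolding det using ncol dQp dRp by simp
  have w0: "(ua+ra,ub+rb) \<noteq> (0,0)"
  proof
    assume "(ua+ra,ub+rb) = (0,0)"
    hence "ra = -ua" "rb = -ub" by auto
    thus False using detne by (simp add: algebra_simps)
  qed
  have uv: "(ua,ub) \<noteq> (ra,rb)" using detne by (auto simp: algebra_simps)
  have e1: "x^2/a^2 + y^2/b^2 = 1" using E unfolding on_ellipse_def by simp
  have nu: "x/a^2*ua + y/b^2*ub = -(1 - x*x2/a^2 - y*y2/b^2)/dQ"
  proof -
    have "x/a^2*ua + y/b^2*ub = (x*x2/a^2 + y*y2/b^2 - (x^2/a^2+y^2/b^2))/dQ"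
      unfolding ua_def ub_def using dQp a b by (simp add: field_simps power2_eq_square)
    thus ?thesis unfolding e1 by (simp add: field_simps)
  qed
  have nv: "x/a^2*ra + y/b^2*rb = -(1 - x*x3/a^2 - y*y3/b^2)/dR"
  proof -
    have "x/a^2*ra + y/b^2*rb = (x*x3/a^2 + y*y3/b^2 - (x^2/a^2+y^2/b^2))/dR"
      unfolding ra_def rb_def using dRp a b by (simp add: field_simps power2_eq_square)
    thus ?thesis unfolding e1 by (simp add: field_simps)
  qed
  have nbd: "normal_bisects a b (x,y) (x2,y2) (x3,y3) \<longleftrightarrow> x/a^2*(ub+rb) - y/b^2*(ua+ra) = 0"
    unfolding normal_bisects_def Let_def det2_def dQ_def[symmetric] dR_def[symmetric] ua_def ub_def ra_def rb_def
    by (simp add: divide_inverse algebra_simps)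
  show ?thesis
  proof
    assume "normal_bisects a b (x,y) (x2,y2) (x3,y3)"
    hence "x/a^2*ua + y/b^2*ub = x/a^2*ra + y/b^2*rb" using bis_fwd[OF _ uu rr w0] nbd by blast
    thus "(1 - x*x2/a^2 - y*y2/b^2)/dist (x2,y2) (x,y) = (1 - x*x3/a^2 - y*y3/b^2)/dist (x3,y3) (x,y)"
      unfolding nu nv dQ_def dR_def by (simp only: minus_divide_left neg_equal_iff_equal)
  next
    assume "(1 - x*x2/a^2 - y*y2/b^2)/dist (x2,y2) (x,y) = (1 - x*x3/a^2 - y*y3/b^2)/dist (x3,y3) (x,y)"
    hence "x/a^2*ua + y/b^2*ub = x/a^2*ra + y/b^2*rb" unfolding nu nv dQ_def dR_def by (simp only: minus_divide_left neg_equal_iff_equal)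
    thus "normal_bisects a b (x,y) (x2,y2) (x3,y3)" using bis_bwd[OF _ uu rr uv] nbd by blast
  qed
qed



lemma center_m:
  fixes a b K m12 m13 m23 p1 q1 p2 q2 p3 q3 :: real
  assumes K: "K > 0" and m: "m12 > 0" "m13 > 0" "m23 > 0"
    and d23: "m23 = K * dist (a*p2,b*q2) (a*p3,b*q3)"
    and d13: "m13 = K * dist (a*p3,b*q3) (a*p1,b*q1)"
    and d12: "m12 = K * dist (a*p1,b*q1) (a*p2,b*q2)"
  shows "tri_center nagel_h (a*p1,b*q1) (a*p2,b*q2) (a*p3,b*q3) =
    (a * (((m12+m13-m23)*p1 + (m12+m23-m13)*p2 + (m13+m23-m12)*p3)/(m12+m13+m23)),
     b * (((m12+m13-m23)*q1 + (m12+m23-m13)*q2 + (m13+m23-m12)*q3)/(m12+m13+m23)))"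
proof -
  define s1 where "s1 = dist (a*p2,b*q2) (a*p3,b*q3)"
  define s2 where "s2 = dist (a*p3,b*q3) (a*p1,b*q1)"
  define s3 where "s3 = dist (a*p1,b*q1) (a*p2,b*q2)"
  have S1: "s1 = m23/K" "s2 = m13/K" "s3 = m12/K" using d23 d13 d12 K unfolding s1_def s2_def s3_def by auto
  have nz: "s1 \<noteq> 0" "s2 \<noteq> 0" "s3 \<noteq> 0" using S1 m K by auto
  have "tri_center nagel_h (a*p1,b*q1) (a*p2,b*q2) (a*p3,b*q3) =
     (1 / ((s2+s3-s1) + (s3+s1-s2) + (s1+s2-s3))) *\<^sub>R
           ((s2+s3-s1) *\<^sub>R (a*p1,b*q1) + (s3+s1-s2) *\<^sub>R (a*p2,b*q2) + (s1+s2-s3) *\<^sub>R (a*p3,b*q3))"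
    unfolding tri_center_def Let_def nagel_h_def s1_def[symmetric] s2_def[symmetric] s3_def[symmetric]
    using nz by simp
  also have "\<dots> = (a * (((m12+m13-m23)*p1 + (m12+m23-m13)*p2 + (m13+m23-m12)*p3)/(m12+m13+m23)),
     b * (((m12+m13-m23)*q1 + (m12+m23-m13)*q2 + (m13+m23-m12)*q3)/(m12+m13+m23)))"
  proof -
    have w: "s2+s3-s1 = (m12+m13-m23)/K" "s3+s1-s2 = (m12+m23-m13)/K" "s1+s2-s3 = (m13+m23-m12)/K"
      "(s2+s3-s1) + (s3+s1-s2) + (s1+s2-s3) = (m12+m13+m23)/K"
      unfolding S1 by (simp_all add: diff_divide_distrib add_divide_distrib)
    define W1 where "W1 = m12+m13-m23"
    define W2 where "W2 = m12+m23-m13"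
    define W3 where "W3 = m13+m23-m12"
    define T where "T = m12+m13+m23"
    have T0: "T > 0" unfolding T_def using m by simp
    have "(1 / (T/K)) *\<^sub>R ((W1/K) *\<^sub>R (a*p1,b*q1) + (W2/K) *\<^sub>R (a*p2,b*q2) + (W3/K) *\<^sub>R (a*p3,b*q3))
        = (a * ((W1*p1 + W2*p2 + W3*p3)/T), b * ((W1*q1 + W2*q2 + W3*q3)/T))"
      using T0 K by (simp add: field_simps)
    thus ?thesis unfolding w(4) unfolding w(1-3) W1_def W2_def W3_def T_def .
  qed
  finally show ?thesis .
qed



lemma params:
  fixes a b :: real
  assumes b: "b > 0" and ab: "a > b"
  defines "c2 \<equiv> a^2 - b^2" and "d \<equiv> sqrt (a^4 - a^2*b^2 + b^4)"
  defines "k \<equiv> (2*d - a^2 - b^2)/c2^2"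
  defines "e \<equiv> k*c2" and "C \<equiv> 1 - k*(a^2+b^2)"
  shows "k > 0" "e^2 = 1+2*C" "0 < e" "e < 1" "1-e > C"
    "(b^2-d)^2/(a*c2) = c2*(1+e)^2/(4*a)" "(a^2-d)^2/(b*c2) = c2*(1-e)^2/(4*b)"
    "4*a^2*e = c2*(1+e)*(3-e)" "4*b^2*e = c2*(1-e)*(3+e)"
    "k^2*c2^2 + 2*k*(a^2+b^2) - 3 = 0" "c2 > 0"
proof -
  have a: "a > 0" using ab b by simp
  have "b^2 < a^2" using ab b by (simp add: power_strict_mono)
  hence c2p: "c2 > 0" unfolding c2_def by simp
  have rad: "a^4 - a^2*b^2 + b^4 = ((a^2+b^2)^2 + 3*c2^2)/4" unfolding c2_def by algebra
  have "((a^2+b^2)^2 + 3*c2^2)/4 \<ge> 0" by simp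
  hence radp: "a^4 - a^2*b^2 + b^4 \<ge> 0" using rad by linarith
  have dd: "d^2 = a^4 - a^2*b^2 + b^4" unfolding d_def by (rule real_sqrt_pow2[OF radp])
  have d0: "d \<ge> 0" unfolding d_def using radp by simp
  have "c2^2 > 0" using c2p by simp
  moreover have "(2*d)^2 = (a^2+b^2)^2 + 3*c2^2" using dd rad by (simp add: power_mult_distrib)
  ultimately have "(2*d)^2 > (a^2+b^2)^2" by linarith
  hence d2: "2*d > a^2+b^2" using d0 by (smt (verit) power_mono zero_le_power2)
  show kp: "k > 0" unfolding k_def using d2 c2p by simp
  have kc: "k*c2^2 = 2*d - a^2 - b^2" unfolding k_def using c2p by simp
  have "(k*c2^2 + a^2 + b^2)^2 = (2*d)^2" using kc by simp
  hence "c2^2*(k^2*c2^2 + 2*k*(a^2+b^2) - 3) = 0" using dd rad by algebra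
  hence kq: "k^2*c2^2 + 2*k*(a^2+b^2) - 3 = 0" using c2p by simp
  show "k^2*c2^2 + 2*k*(a^2+b^2) - 3 = 0" by (rule kq)
  show "c2 > 0" by (rule c2p)
  show eC: "e^2 = 1+2*C" unfolding e_def C_def using kq by algebra
  show e0: "0 < e" unfolding e_def using kp c2p by simp
  show eC2: "1-e > C" unfolding e_def C_def c2_def using kp b by (simp add: algebra_simps)
  have "e^2 + 2*e - 3 < 0" using eC eC2 by simp
  hence "(e-1)*(e+3) < 0" by (simp add: algebra_simps power2_eq_square)
  thus "e < 1"
  proof (rule contrapos_pp)
    assume "\<not> e < 1"
    hence "e - 1 \<ge> 0" "e + 3 \<ge> 0" using e0 by auto
    thus "\<not> (e-1)*(e+3) < 0" by (simp add: not_less)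
  qed
  have dk: "d = (k*c2^2 + a^2 + b^2)/2" using kc by simp
  show "(b^2-d)^2/(a*c2) = c2*(1+e)^2/(4*a)"
    unfolding dk e_def using a c2p by (simp add: field_simps c2_def) algebra
  show "(a^2-d)^2/(b*c2) = c2*(1-e)^2/(4*b)"
    unfolding dk e_def using b c2p by (simp add: field_simps c2_def) algebra
  show "4*a^2*e = c2*(1+e)*(3-e)" using kq unfolding e_def c2_def by algebra
  show "4*b^2*e = c2*(1-e)*(3+e)" using kq unfolding e_def c2_def by algebra
qed



lemma E8_poly:
  fixes p q e :: real
  assumes "p^2+q^2=1"
  shows "p^2*(4*p^2+(e+1)*(e-3))^2 + q^2*(4*p^2-(1+e)^2)^2 = (4*e*p^2-(1+e)^2)^2"
  using assms by algebra

lemma E8_gen: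
  fixes a c uu vv ww D e p A :: real
  assumes nz: "a \<noteq> 0" "c \<noteq> 0" "uu \<noteq> 0" "vv \<noteq> 0" "D \<noteq> 0" and ww: "ww^2 = vv^2"
    and h: "16*a^4*e^2 = c^2*uu^2*ww^2"
  shows "(a*(e*uu*p*A/(vv *D)))^2/(c*uu^2/(4*a))^2 = p^2*A^2/D^2"
proof -
  have "(a*(e*uu*p*A/(vv *D)))^2/(c*uu^2/(4*a))^2 = (16*a^4*e^2)*uu^2*p^2*A^2/(vv^2 *D^2*c^2*uu^4)"
    using nz by (simp add: field_simps power2_eq_square power4_eq_xxxx)
  also have "\<dots> = p^2*A^2/D^2" unfolding h ww using nz by (simp add: field_simps power2_eq_square power4_eq_xxxx)
  finally show ?thesis .
qed

lemma E8:
  fixes a b c2 p q e :: real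
  assumes pq: "p^2+q^2=1" and e0: "0<e" and e1: "e<1" and a: "a>0" and b: "b>0" and c: "c2>0"
    and ha: "4*a^2*e = c2*(1+e)*(3-e)" and hb: "4*b^2*e = c2*(1-e)*(3+e)"
  shows "(a*(e*(e+1)*p*(4*p^2+(e+1)*(e-3))/((e-3)*(4*e*p^2-(1+e)^2))))^2/(c2*(1+e)^2/(4*a))^2
       + (b*(e*(e-1)*q*(4*p^2-(1+e)^2)/((e+3)*(4*e*p^2-(1+e)^2))))^2/(c2*(1-e)^2/(4*b))^2 = 1"
proof -
  define A where "A = 4*p^2+(e+1)*(e-3)"
  define B where "B = 4*p^2-(1+e)^2"
  define D where "D = 4*e*p^2-(1+e)^2"
  have p2le: "p^2 \<le> 1" using pq by (metis add_le_cancel_left add.right_neutral zero_le_power2)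
  have "D \<le> 4*e - (1+e)^2" unfolding D_def using p2le e0 by simp
  also have "\<dots> = -((1-e)^2)" by (simp add: power2_eq_square algebra_simps)
  finally have Dneg: "D < 0" using e1 by (smt (verit) zero_less_power2)
  have ha2: "16*a^4*e^2 = c2^2*(1+e)^2*(3-e)^2"
  proof -
    have "(4*a^2*e)^2 = (c2*(1+e)*(3-e))^2" using ha by simp
    thus ?thesis by (simp add: power_mult_distrib power2_eq_square power4_eq_xxxx algebra_simps)
  qed
  have hb2: "16*b^4*e^2 = c2^2*(1-e)^2*(3+e)^2"
  proof -
    have "(4*b^2*e)^2 = (c2*(1-e)*(3+e))^2" using hb by simp
    thus ?thesis by (simp add: power_mult_distrib power2_eq_square power4_eq_xxxx algebra_simps)
  qed
  have nz: "e-3 \<noteq> 0" "1+e \<noteq> 0" "e+3 \<noteq> 0" "1-e \<noteq> 0" "D \<noteq> 0" "3-e \<noteq> 0" "e-1 \<noteq> 0" using e0 e1 Dneg by auto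
  have t1: "(a*(e*(e+1)*p*A/((e-3)*D)))^2/(c2*(1+e)^2/(4*a))^2 = p^2*A^2/D^2"
    using E8_gen[of a c2 "e+1" "e-3" D "3-e" e p A] a c nz ha2 by (simp add: power2_commute add.commute)
  have t2: "(b*(e*(e-1)*q*B/((e+3)*D)))^2/(c2*(1-e)^2/(4*b))^2 = q^2*B^2/D^2"
  proof -
    have "(1-e)^2 = (e-1)^2" by (simp add: power2_commute)
    moreover have "16*b^4*e^2 = c2^2*(e-1)^2*(3+e)^2" using hb2 by (simp add: power2_commute)
    ultimately show ?thesis using E8_gen[of b c2 "e-1" "e+3" D "3+e" e q B] b c nz by (simp add: add.commute)
  qed
  have ne: "c2^2*(1+e)^2*(3-e)^2 \<noteq> 0" "c2^2*(1-e)^2*(3+e)^2 \<noteq> 0" "D^2 \<noteq> 0" using c e0 e1 Dneg by auto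
  have "p^2*A^2/D^2 + q^2*B^2/D^2 = (p^2*A^2 + q^2*B^2)/D^2" by (simp add: add_divide_distrib)
  also have "\<dots> = 1" using E8_poly[OF pq, of e] ne unfolding A_def B_def D_def by simp
  finally show ?thesis using t1 t2 unfolding A_def B_def D_def by simp
qed




definition Fx :: "real \<Rightarrow> real \<Rightarrow> real" where
  "Fx e p = e*(e+1)*p*(4*p^2+(e+1)*(e-3))/((e-3)*(4*e*p^2-(1+e)^2))"
definition Fy :: "real \<Rightarrow> real \<Rightarrow> real \<Rightarrow> real" where
  "Fy e p q = e*(e-1)*q*(4*p^2-(1+e)^2)/((e+3)*(4*e*p^2-(1+e)^2))"

lemma m_pos:
  fixes p q p' q' :: real
  assumes "p^2+q^2=1" "p'^2+q'^2=1" "(p,q) \<noteq> (p',q')"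
  shows "1 - p*p' - q*q' > 0"
proof -
  have "2*(1 - p*p' - q*q') = (p-p')^2 + (q-q')^2" using assms(1,2) by algebra
  moreover have "(p-p')^2 + (q-q')^2 > 0" using assms(3) by (auto simp: sum_power2_gt_zero_iff)
  ultimately show ?thesis by simp
qed

lemma md_of_G:
  fixes a b k p q p' q' :: real
  assumes k: "k > 0" and u: "p^2+q^2=1" "p'^2+q'^2=1" and d: "(p,q) \<noteq> (p',q')"
    and G: "(1 - k*(a^2-b^2))*p*p' + (1 + k*(a^2-b^2))*q*q' = 1 - k*(a^2+b^2)"
  shows "1 - p*p' - q*q' = sqrt k * dist (a*p, b*q) (a*p', b*q')"
proof -
  define m where "m = 1 - p*p' - q*q'"
  define L where "L = a^2+b^2-(a^2-b^2)*(p*p'-q*q')"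
  have mL: "m = k*L" using G unfolding m_def L_def by (simp add: algebra_simps)
  have mp: "m > 0" unfolding m_def by (rule m_pos[OF u d])
  have d2: "(dist (a*p, b*q) (a*p', b*q'))^2 = m*L" unfolding dist_sq m_def L_def by (rule chord_id[OF u])
  have "(sqrt k * dist (a*p, b*q) (a*p', b*q'))^2 = k*(m*L)" using k by (simp add: power_mult_distrib d2)
  also have "\<dots> = m^2" using mL by (simp add: power2_eq_square)
  finally have "(sqrt k * dist (a*p, b*q) (a*p', b*q'))^2 = m^2" .
  moreover have "sqrt k * dist (a*p, b*q) (a*p', b*q') \<ge> 0" using k by simp
  ultimately show ?thesis using mp unfolding m_def[symmetric] by (metis abs_of_nonneg less_imp_le real_sqrt_abs real_sqrt_pow2 abs_of_pos power2_eq_iff)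
qed

lemma G_of_md:
  fixes a b K p q p' q' :: real
  assumes K: "K > 0" and u: "p^2+q^2=1" "p'^2+q'^2=1" and d: "(p,q) \<noteq> (p',q')"
    and md: "1 - p*p' - q*q' = K * dist (a*p, b*q) (a*p', b*q')"
  shows "(1 - K^2*(a^2-b^2))*p*p' + (1 + K^2*(a^2-b^2))*q*q' = 1 - K^2*(a^2+b^2)"
proof -
  define m where "m = 1 - p*p' - q*q'"
  define L where "L = a^2+b^2-(a^2-b^2)*(p*p'-q*q')"
  have mp: "m > 0" unfolding m_def by (rule m_pos[OF u d])
  have d2: "(dist (a*p, b*q) (a*p', b*q'))^2 = m*L" unfolding dist_sq m_def L_def by (rule chord_id[OF u])
  have "m^2 = K^2*(m*L)" using md unfolding m_def[symmetric] d2[symmetric] by (simp add: power_mult_distrib)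
  hence "m*m = m*(K^2*L)" by (simp add: power2_eq_square algebra_simps)
  hence "m = K^2*L" using mp by simp
  thus ?thesis unfolding m_def L_def by (simp add: algebra_simps)
qed

lemma N_pos:
  fixes p q e C x y :: real
  assumes u: "p^2+q^2=1" and l: "(1-e)*p*x+(1+e)*q*y = C" and e0: "e > 0" and eC: "1-e > C"
  shows "((1-e)*p)^2+((1+e)*q)^2 > 0"
proof (rule ccontr)
  assume "\<not> ((1-e)*p)^2+((1+e)*q)^2 > 0"
  moreover have "((1-e)*p)^2+((1+e)*q)^2 \<ge> 0" by simp
  ultimately have "((1-e)*p)^2+((1+e)*q)^2 = 0" by linarith
  hence a: "(1-e)*p = 0" "(1+e)*q = 0" by (simp_all add: sum_power2_eq_zero_iff)
  hence "C = 0" using l by (metis add.right_neutral mult_zero_left)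
  hence "p = 0" using a eC by simp
  moreover have "q = 0" using a e0 by simp
  ultimately show False using u by simp
qed

lemma tp_center:
  fixes a b :: real and P1 P2 P3 :: pt
  assumes b: "b>0" and ab: "a>b" and T: "three_periodic a b P1 P2 P3"
  defines "c2 \<equiv> a^2 - b^2" and "d \<equiv> sqrt (a^4 - a^2*b^2 + b^4)"
  defines "k \<equiv> (2*d - a^2 - b^2)/c2^2"
  defines "e \<equiv> k*c2" and "C \<equiv> 1 - k*(a^2+b^2)"
  shows "tri_center nagel_h P1 P2 P3 = (a * Fx e (fst P1/a), b * Fy e (fst P1/a) (snd P1/b))"
proof -
  have a: "a > 0" using ab b by simp
  have par: "k > 0" "e^2 = 1+2*C" "0 < e" "e < 1" "1-e > C"
    "k^2*c2^2 + 2*k*(a^2+b^2) - 3 = 0" "c2 > 0"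
    unfolding C_def e_def k_def d_def c2_def using params[OF b ab] by blast+
  define p1 where "p1 = fst P1/a"
  define q1 where "q1 = snd P1/b"
  define p2 where "p2 = fst P2/a"
  define q2 where "q2 = snd P2/b"
  define p3 where "p3 = fst P3/a"
  define q3 where "q3 = snd P3/b"
  have PP: "P1 = (a*p1, b*q1)" "P2 = (a*p2, b*q2)" "P3 = (a*p3, b*q3)"
    unfolding p1_def q1_def p2_def q2_def p3_def q3_def using a b by simp_all
  have onE: "on_ellipse a b P1" "on_ellipse a b P2" "on_ellipse a b P3"
    and ndet: "det2 (P2 - P1) (P3 - P1) \<noteq> 0"
    and nb1: "normal_bisects a b P1 P2 P3" and nb2: "normal_bisects a b P2 P3 P1"
    using T unfolding three_periodic_def by blast+
  have u1: "p1^2+q1^2=1" using onE(1) a b unfolding PP on_ellipse_def by (simp add: power_mult_distrib)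
  have u2: "p2^2+q2^2=1" using onE(2) a b unfolding PP on_ellipse_def by (simp add: power_mult_distrib)
  have u3: "p3^2+q3^2=1" using onE(3) a b unfolding PP on_ellipse_def by (simp add: power_mult_distrib)
  have "det2 (P2 - P1) (P3 - P1) = a*b*((p2-p1)*(q3-q1)-(q2-q1)*(p3-p1))"
    unfolding PP det2_def by (simp add: algebra_simps)
  hence dt: "(p2-p1)*(q3-q1)-(q2-q1)*(p3-p1) \<noteq> 0" using ndet by auto
  have ncol1: "(a*p2-a*p1)*(b*q3-b*q1)-(b*q2-b*q1)*(a*p3-a*p1) \<noteq> 0"
  proof -
    have "(a*p2-a*p1)*(b*q3-b*q1)-(b*q2-b*q1)*(a*p3-a*p1) = a*b*((p2-p1)*(q3-q1)-(q2-q1)*(p3-p1))"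
      by (simp add: algebra_simps)
    thus ?thesis using dt a b by simp
  qed
  have ncol2: "(a*p3-a*p2)*(b*q1-b*q2)-(b*q3-b*q2)*(a*p1-a*p2) \<noteq> 0"
  proof -
    have "(a*p3-a*p2)*(b*q1-b*q2)-(b*q3-b*q2)*(a*p1-a*p2) = a*b*((p2-p1)*(q3-q1)-(q2-q1)*(p3-p1))"
      by (simp add: algebra_simps)
    thus ?thesis using dt a b by simp
  qed
  have d12: "(p1,q1) \<noteq> (p2,q2)" using dt by auto
  have d13: "(p1,q1) \<noteq> (p3,q3)" using dt by auto
  have d23: "(p2,q2) \<noteq> (p3,q3)" using dt by (auto simp: algebra_simps)
  define D12 where "D12 = dist (a*p1,b*q1) (a*p2,b*q2)"
  define D13 where "D13 = dist (a*p1,b*q1) (a*p3,b*q3)"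
  define D23 where "D23 = dist (a*p2,b*q2) (a*p3,b*q3)"
  have abp: "\<And>x y. (a*x)*(a*y)/a^2 = x*y" "\<And>x y. (b*x)*(b*y)/b^2 = x*y" using a b by (simp_all add: power2_eq_square)
  have r1: "(1 - p1*p2 - q1*q2)/D12 = (1 - p1*p3 - q1*q3)/D13"
    using nb1 nb_iff[OF a b onE(1)[unfolded PP] ncol1] unfolding PP D12_def D13_def
    by (simp add: abp dist_commute)
  have r2: "(1 - p2*p3 - q2*q3)/D23 = (1 - p1*p2 - q1*q2)/D12"
    using nb2 nb_iff[OF a b onE(2)[unfolded PP] ncol2] unfolding PP D12_def D23_def
    by (simp add: abp dist_commute mult.commute)
  have D12p: "D12 > 0" unfolding D12_def using d12 a b by auto
  have D13p: "D13 > 0" unfolding D13_def using d13 a b by auto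
  have D23p: "D23 > 0" unfolding D23_def using d23 a b by auto
  define K where "K = (1 - p1*p2 - q1*q2)/D12"
  have Kp: "K > 0" unfolding K_def using m_pos[OF u1 u2 d12] D12p by simp
  have mk12: "1 - p1*p2 - q1*q2 = K * dist (a*p1,b*q1) (a*p2,b*q2)" unfolding K_def D12_def[symmetric] using D12p by simp
  have mk13: "1 - p1*p3 - q1*q3 = K * dist (a*p1,b*q1) (a*p3,b*q3)" unfolding K_def D13_def[symmetric] r1 using D13p by simp
  have mk23: "1 - p2*p3 - q2*q3 = K * dist (a*p2,b*q2) (a*p3,b*q3)" unfolding K_def D23_def[symmetric] r2[symmetric] using D23p by simp
  have G12: "(1 - K^2*c2)*p1*p2 + (1 + K^2*c2)*q1*q2 = 1 - K^2*(a^2+b^2)"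
    unfolding c2_def by (rule G_of_md[OF Kp u1 u2 d12 mk12])
  have G13: "(1 - K^2*c2)*p1*p3 + (1 + K^2*c2)*q1*q3 = 1 - K^2*(a^2+b^2)"
    unfolding c2_def by (rule G_of_md[OF Kp u1 u3 d13 mk13])
  have G23: "(1 - K^2*c2)*p2*p3 + (1 + K^2*c2)*q2*q3 = 1 - K^2*(a^2+b^2)"
    unfolding c2_def by (rule G_of_md[OF Kp u2 u3 d23 mk23])
  have ep: "K^2*c2 > 0" using Kp par(7) by simp
  have eCp: "1 - K^2*c2 > 1 - K^2*(a^2+b^2)" using Kp b unfolding c2_def by (simp add: algebra_simps)
  have cf: "(K^2*c2)^2 = 1 + 2*(1 - K^2*(a^2+b^2))"
    by (rule closure_forced[OF u1 u2 u3 d12 d13 d23 G12 G13 G23 ep eCp])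
  have "(K^2 - k)*(c2^2*(K^2+k) + 2*(a^2+b^2)) = 0" using cf par(6) by algebra
  moreover have "c2^2*(K^2+k) + 2*(a^2+b^2) > 0"
  proof -
    have "K^2 > 0" using Kp by simp
    hence "K^2+k > 0" using par(1) by linarith
    moreover have "c2^2 > 0" using par(7) by simp
    ultimately have "c2^2*(K^2+k) > 0" by (rule mult_pos_pos[rotated])
    moreover have "a^2+b^2 > 0" using b by (simp add: add_nonneg_pos)
    ultimately show ?thesis by simp
  qed
  ultimately have Kk: "K^2 = k" by simp
  have g12: "(1-e)*p1*p2 + (1+e)*q1*q2 = C" using G12 unfolding Kk e_def C_def by (simp add: mult.commute)
  have g13: "(1-e)*p1*p3 + (1+e)*q1*q3 = C" using G13 unfolding Kk e_def C_def by (simp add: mult.commute)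
  have g23: "(1-e)*p2*p3 + (1+e)*q2*q3 = C" using G23 unfolding Kk e_def C_def by (simp add: mult.commute)
  define N where "N = ((1-e)*p1)^2+((1+e)*q1)^2"
  have Np: "N > 0" unfolding N_def by (rule N_pos[OF u1 g12 par(3) par(5)])
  obtain r where rr: "r^2 = N - C^2" and x2: "p2 = (C*(1-e)*p1 - r*(1+e)*q1)/N" and y2: "q2 = (C*(1+e)*q1 + r*(1-e)*p1)/N"
      and x3: "p3 = (C*(1-e)*p1 + r*(1+e)*q1)/N" and y3: "q3 = (C*(1+e)*q1 - r*(1-e)*p1)/N"
    using pair_G(2)[OF N_def Np u2 u3 d23 g12 g13] by blast
  have Cd: "C = (e^2-1)/2" using par(2) by simp
  have Nd: "N = (1-e)^2*p1^2+(1+e)^2*q1^2" unfolding N_def by (simp add: power_mult_distrib)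
  note cr = core[OF u1 Cd Nd rr par(3) par(4)]
  have cm: "tri_center nagel_h (a*p1,b*q1) (a*p2,b*q2) (a*p3,b*q3) =
    (a * (((1 - p1*p2 - q1*q2 + (1 - p1*p3 - q1*q3) - (1 - p2*p3 - q2*q3))*p1 + ((1 - p1*p2 - q1*q2) + (1 - p2*p3 - q2*q3) - (1 - p1*p3 - q1*q3))*p2 + ((1 - p1*p3 - q1*q3) + (1 - p2*p3 - q2*q3) - (1 - p1*p2 - q1*q2))*p3)/((1 - p1*p2 - q1*q2)+(1 - p1*p3 - q1*q3)+(1 - p2*p3 - q2*q3))),
     b * (((1 - p1*p2 - q1*q2 + (1 - p1*p3 - q1*q3) - (1 - p2*p3 - q2*q3))*q1 + ((1 - p1*p2 - q1*q2) + (1 - p2*p3 - q2*q3) - (1 - p1*p3 - q1*q3))*q2 + ((1 - p1*p3 - q1*q3) + (1 - p2*p3 - q2*q3) - (1 - p1*p2 - q1*q2))*q3)/((1 - p1*p2 - q1*q2)+(1 - p1*p3 - q1*q3)+(1 - p2*p3 - q2*q3))))"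
    apply (rule center_m[OF Kp m_pos[OF u1 u2 d12] m_pos[OF u1 u3 d13] m_pos[OF u2 u3 d23]])
    using mk23 apply simp
    using mk13 apply (simp add: dist_commute)
    using mk12 apply simp
    done
  have "tri_center nagel_h P1 P2 P3 = (a * Fx e p1, b * Fy e p1 q1)"
    unfolding PP cm cr(1)[folded x2 y2 x3 y3] cr(2)[folded x2 y2 x3 y3] Fx_def Fy_def by simp
  thus ?thesis unfolding p1_def q1_def .
qed

lemma construct:
  fixes a b p q :: real
  assumes b: "b>0" and ab: "a>b" and u1: "p^2+q^2=1"
  defines "c2 \<equiv> a^2 - b^2" and "d \<equiv> sqrt (a^4 - a^2*b^2 + b^4)"
  defines "k \<equiv> (2*d - a^2 - b^2)/c2^2"
  defines "e \<equiv> k*c2" and "C \<equiv> 1 - k*(a^2+b^2)"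
  shows "\<exists>P1 P2 P3. three_periodic a b P1 P2 P3 \<and> tri_center nagel_h P1 P2 P3 = (a * Fx e p, b * Fy e p q)"
proof -
  have a: "a > 0" using ab b by simp
  have par: "k > 0" "e^2 = 1+2*C" "0 < e" "e < 1" "1-e > C"
    "k^2*c2^2 + 2*k*(a^2+b^2) - 3 = 0" "c2 > 0"
    unfolding C_def e_def k_def d_def c2_def using params[OF b ab] by blast+
  have e0: "e > 0" and e1: "e < 1" using par by auto
  define N where "N = ((1-e)*p)^2+((1+e)*q)^2"
  have Nd: "N = (1-e)^2*p^2+(1+e)^2*q^2" unfolding N_def by (simp add: power_mult_distrib)
  have Nalt: "N = (1+e)^2 - 4*e*p^2" using u1 unfolding Nd by algebra
  have p2le: "p^2 \<le> 1" using u1 by (metis add_le_cancel_left add.right_neutral zero_le_power2)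
  have N1: "N \<ge> (1-e)^2" unfolding Nalt using p2le e0 by (simp add: power2_eq_square algebra_simps)
  have Cd: "C = (e^2-1)/2" using par(2) by simp
  have CC: "C^2 = (1-e)^2*((1+e)^2/4)" unfolding Cd by (simp add: power2_eq_square field_simps)
  have "(1+e)^2 < 2^2" using e0 e1 by (intro power_strict_mono) auto
  hence "(1+e)^2/4 < 1" by simp
  moreover have "(1-e)^2 > 0" using e1 by simp
  ultimately have "C^2 < (1-e)^2" unfolding CC by (simp add: mult_less_cancel_left1)
  hence NC: "N - C^2 > 0" using N1 by linarith
  have Np: "N > 0" using NC by (smt (verit) zero_le_power2)
  define r where "r = sqrt (N - C^2)"
  have rr: "r^2 = N - C^2" unfolding r_def using NC by simp
  have rp: "r > 0" unfolding r_def using NC by simp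
  define p2 where "p2 = (C*(1-e)*p - r*(1+e)*q)/N"
  define q2 where "q2 = (C*(1+e)*q + r*(1-e)*p)/N"
  define p3 where "p3 = (C*(1-e)*p + r*(1+e)*q)/N"
  define q3 where "q3 = (C*(1+e)*q - r*(1-e)*p)/N"
  have u2: "p2^2+q2^2 = 1"
  proof -
    have "(C*(1-e)*p - r*(1+e)*q)^2 + (C*(1+e)*q + r*(1-e)*p)^2 = (C^2+r^2)*N" unfolding N_def by algebra
    hence "(C*(1-e)*p - r*(1+e)*q)^2 + (C*(1+e)*q + r*(1-e)*p)^2 = N^2" using rr by (simp add: power2_eq_square)
    thus ?thesis unfolding p2_def q2_def using Np by (simp add: power_divide add_divide_distrib[symmetric])
  qed
  have u3: "p3^2+q3^2 = 1"
  proof -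
    have "(C*(1-e)*p + r*(1+e)*q)^2 + (C*(1+e)*q - r*(1-e)*p)^2 = (C^2+r^2)*N" unfolding N_def by algebra
    hence "(C*(1-e)*p + r*(1+e)*q)^2 + (C*(1+e)*q - r*(1-e)*p)^2 = N^2" using rr by (simp add: power2_eq_square)
    thus ?thesis unfolding p3_def q3_def using Np by (simp add: power_divide add_divide_distrib[symmetric])
  qed
  have g12: "(1-e)*p*p2 + (1+e)*q*q2 = C"
  proof -
    have "(1-e)*p*(C*(1-e)*p - r*(1+e)*q) + (1+e)*q*(C*(1+e)*q + r*(1-e)*p) = C*N" unfolding N_def by algebra
    moreover have "(1-e)*p*p2 + (1+e)*q*q2 = ((1-e)*p*(C*(1-e)*p - r*(1+e)*q) + (1+e)*q*(C*(1+e)*q + r*(1-e)*p))/N"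
      unfolding p2_def q2_def using Np by (simp add: field_simps)
    ultimately show ?thesis using Np by simp
  qed
  have g13: "(1-e)*p*p3 + (1+e)*q*q3 = C"
  proof -
    have "(1-e)*p*(C*(1-e)*p + r*(1+e)*q) + (1+e)*q*(C*(1+e)*q - r*(1-e)*p) = C*N" unfolding N_def by algebra
    moreover have "(1-e)*p*p3 + (1+e)*q*q3 = ((1-e)*p*(C*(1-e)*p + r*(1+e)*q) + (1+e)*q*(C*(1+e)*q - r*(1-e)*p))/N"
      unfolding p3_def q3_def using Np by (simp add: field_simps)
    ultimately show ?thesis using Np by simp
  qed
  have d23: "(p2,q2) \<noteq> (p3,q3)"
  proof
    assume h: "(p2,q2) = (p3,q3)"
    have "p2 - p3 = -2*r*(1+e)*q/N" "q2 - q3 = 2*r*(1-e)*p/N" unfolding p2_def p3_def q2_def q3_def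
      by (simp_all add: diff_divide_distrib[symmetric] algebra_simps)
    hence "r*(1+e)*q = 0" "r*(1-e)*p = 0" using h Np by auto
    hence "q = 0" "p = 0" using rp e0 e1 by auto
    thus False using u1 by simp
  qed
  have gself: "(1-e)*p*p + (1+e)*q*q > C"
  proof -
    have "(1-e)*q^2 \<le> (1+e)*q^2" using e0 by (intro mult_right_mono) auto
    hence "(1-e)*p^2+(1-e)*q^2 \<le> (1-e)*p^2+(1+e)*q^2" by linarith
    moreover have "(1-e)*p^2+(1-e)*q^2 = 1-e" by (metis u1 distrib_left mult.right_neutral)
    ultimately show ?thesis using par(5) by (simp add: power2_eq_square algebra_simps)
  qed
  have d12: "(p,q) \<noteq> (p2,q2)" using g12 gself by auto
  have d13: "(p,q) \<noteq> (p3,q3)" using g13 gself by auto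
  have g23: "(1-e)*p2*p3 + (1+e)*q2*q3 = C"
  proof -
    have h1: "((1-e)*p2*p3+(1+e)*q2*q3)*N^2 = C^2*((1-e)^3*p^2+(1+e)^3*q^2) - (N-C^2)*(1-e)*(1+e)*((1-e)*p^2+(1+e)*q^2)"
      by (rule pair_G(1)[OF N_def Np u2 u3 d23 g12 g13])
    have h2: "(e^2-1-2*C) = 0" using par(2) by simp
    have "C^2*((1-e)^3*p^2+(1+e)^3*q^2) - (N-C^2)*(1-e)*(1+e)*((1-e)*p^2+(1+e)*q^2) - C*N^2 = 0"
      using E_factor[OF u1, where e=e and C=C] unfolding Nd[symmetric] h2 by simp
    hence "((1-e)*p2*p3+(1+e)*q2*q3)*N^2 = C*N^2" using h1 by simp
    thus ?thesis using Np by simp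
  qed
  have ek: "e = k*(a^2-b^2)" "C = 1 - k*(a^2+b^2)" unfolding e_def c2_def C_def by simp_all
  have M12: "1 - p*p2 - q*q2 = sqrt k * dist (a*p, b*q) (a*p2, b*q2)"
    by (rule md_of_G[OF par(1) u1 u2 d12]) (use g12 ek in simp)
  have M13: "1 - p*p3 - q*q3 = sqrt k * dist (a*p, b*q) (a*p3, b*q3)"
    by (rule md_of_G[OF par(1) u1 u3 d13]) (use g13 ek in simp)
  have M23: "1 - p2*p3 - q2*q3 = sqrt k * dist (a*p2, b*q2) (a*p3, b*q3)"
    by (rule md_of_G[OF par(1) u2 u3 d23]) (use g23 ek in simp)
  have sk: "sqrt k > 0" using par(1) by simp
  define P1 where "P1 = (a*p, b*q)"
  define P2 where "P2 = (a*p2, b*q2)"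
  define P3 where "P3 = (a*p3, b*q3)"
  have onE: "on_ellipse a b (a*x, b*y)" if "x^2+y^2=1" for x y
    using that a b unfolding on_ellipse_def by (simp add: power_mult_distrib)
  have dt: "(p2-p)*(q3-q)-(q2-q)*(p3-p) \<noteq> 0" by (rule det_circle_ne[OF u1 u2 u3 d12 d13 d23])
  have dd: "det2 (P2 - P1) (P3 - P1) = a*b*((p2-p)*(q3-q)-(q2-q)*(p3-p))"
    unfolding P1_def P2_def P3_def det2_def by (simp add: algebra_simps)
  have ncol1: "(a*p2-a*p)*(b*q3-b*q)-(b*q2-b*q)*(a*p3-a*p) \<noteq> 0"
  proof -
    have "(a*p2-a*p)*(b*q3-b*q)-(b*q2-b*q)*(a*p3-a*p) = a*b*((p2-p)*(q3-q)-(q2-q)*(p3-p))"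
      by (simp add: algebra_simps)
    thus ?thesis using dt a b by simp
  qed
  have ncol2: "(a*p3-a*p2)*(b*q-b*q2)-(b*q3-b*q2)*(a*p-a*p2) \<noteq> 0"
  proof -
    have "(a*p3-a*p2)*(b*q-b*q2)-(b*q3-b*q2)*(a*p-a*p2) = a*b*((p2-p)*(q3-q)-(q2-q)*(p3-p))"
      by (simp add: algebra_simps)
    thus ?thesis using dt a b by simp
  qed
  have ncol3: "(a*p-a*p3)*(b*q2-b*q3)-(b*q-b*q3)*(a*p2-a*p3) \<noteq> 0"
  proof -
    have "(a*p-a*p3)*(b*q2-b*q3)-(b*q-b*q3)*(a*p2-a*p3) = a*b*((p2-p)*(q3-q)-(q2-q)*(p3-p))"
      by (simp add: algebra_simps)
    thus ?thesis using dt a b by simp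
  qed
  have abp: "\<And>x y. (a*x)*(a*y)/a^2 = x*y" "\<And>x y. (b*x)*(b*y)/b^2 = x*y" using a b by (simp_all add: power2_eq_square)
  have D12p: "dist (a*p,b*q) (a*p2,b*q2) > 0" using d12 a b by auto
  have D13p: "dist (a*p,b*q) (a*p3,b*q3) > 0" using d13 a b by auto
  have D23p: "dist (a*p2,b*q2) (a*p3,b*q3) > 0" using d23 a b by auto
  have R12: "(1 - p*p2 - q*q2)/dist (a*p,b*q) (a*p2,b*q2) = sqrt k" using M12 D12p by simp
  have R13: "(1 - p*p3 - q*q3)/dist (a*p,b*q) (a*p3,b*q3) = sqrt k" using M13 D13p by simp
  have R23: "(1 - p2*p3 - q2*q3)/dist (a*p2,b*q2) (a*p3,b*q3) = sqrt k" using M23 D23p by simp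
  have nb1: "normal_bisects a b P1 P2 P3"
    unfolding P1_def P2_def P3_def nb_iff[OF a b onE[OF u1] ncol1]
    using R12 R13 by (simp add: abp dist_commute)
  have nb2: "normal_bisects a b P2 P3 P1"
    unfolding P1_def P2_def P3_def nb_iff[OF a b onE[OF u2] ncol2]
    using R12 R23 by (simp add: abp dist_commute mult.commute)
  have nb3: "normal_bisects a b P3 P1 P2"
    unfolding P1_def P2_def P3_def nb_iff[OF a b onE[OF u3] ncol3]
    using R13 R23 by (simp add: abp dist_commute mult.commute)
  have T: "three_periodic a b P1 P2 P3"
    unfolding three_periodic_def using onE[OF u1] onE[OF u2] onE[OF u3] dd dt a b nb1 nb2 nb3
    unfolding P1_def P2_def P3_def by simp
  note cr = core[OF u1 Cd Nd rr par(3) par(4)]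
  have cm: "tri_center nagel_h (a*p,b*q) (a*p2,b*q2) (a*p3,b*q3) =
    (a * (((1 - p*p2 - q*q2 + (1 - p*p3 - q*q3) - (1 - p2*p3 - q2*q3))*p + ((1 - p*p2 - q*q2) + (1 - p2*p3 - q2*q3) - (1 - p*p3 - q*q3))*p2 + ((1 - p*p3 - q*q3) + (1 - p2*p3 - q2*q3) - (1 - p*p2 - q*q2))*p3)/((1 - p*p2 - q*q2)+(1 - p*p3 - q*q3)+(1 - p2*p3 - q2*q3))),
     b * (((1 - p*p2 - q*q2 + (1 - p*p3 - q*q3) - (1 - p2*p3 - q2*q3))*q + ((1 - p*p2 - q*q2) + (1 - p2*p3 - q2*q3) - (1 - p*p3 - q*q3))*q2 + ((1 - p*p3 - q*q3) + (1 - p2*p3 - q2*q3) - (1 - p*p2 - q*q2))*q3)/((1 - p*p2 - q*q2)+(1 - p*p3 - q*q3)+(1 - p2*p3 - q2*q3))))"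
    apply (rule center_m[OF sk m_pos[OF u1 u2 d12] m_pos[OF u1 u3 d13] m_pos[OF u2 u3 d23]])
    using M23 apply simp
    using M13 apply (simp add: dist_commute)
    using M12 apply simp
    done
  have "tri_center nagel_h P1 P2 P3 = (a * Fx e p, b * Fy e p q)"
    unfolding P1_def P2_def P3_def cm cr(1)[folded p2_def q2_def p3_def q3_def] cr(2)[folded p2_def q2_def p3_def q3_def] Fx_def Fy_def by simp
  thus ?thesis using T by blast
qed

theorem theorem1:
  fixes a b :: real
  assumes "a > b" and "b > 0"
  shows "let c2 = a^2 - b^2;
             \<delta> = sqrt (a^4 - a^2 * b^2 + b^4);
             a8 = (b^2 - \<delta>)^2 / (a * c2);
             b8 = (a^2 - \<delta>)^2 / (b * c2)
         in locus a b nagel_h = {P. (fst P)^2 / a8^2 + (snd P)^2 / b8^2 = 1}"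
proof -
  note ab = assms(1) and b = assms(2)
  have a: "a > 0" using ab b by simp
  define c2 where "c2 = a^2 - b^2"
  define d where "d = sqrt (a^4 - a^2*b^2 + b^4)"
  define k where "k = (2*d - a^2 - b^2)/c2^2"
  define e where "e = k*c2"
  define C where "C = 1 - k*(a^2+b^2)"
  have par: "k > 0" "e^2 = 1+2*C" "0 < e" "e < 1" "1-e > C"
    "(b^2-d)^2/(a*c2) = c2*(1+e)^2/(4*a)" "(a^2-d)^2/(b*c2) = c2*(1-e)^2/(4*b)"
    "4*a^2*e = c2*(1+e)*(3-e)" "4*b^2*e = c2*(1-e)*(3+e)" "c2 > 0"
    unfolding C_def e_def k_def d_def c2_def using params[OF b ab] by blast+
  define a8 where "a8 = c2*(1+e)^2/(4*a)"
  define b8 where "b8 = c2*(1-e)^2/(4*b)"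
  have a8p: "a8 > 0" unfolding a8_def using par a by simp
  have b8p: "b8 > 0" unfolding b8_def using par b by simp
  have ell: "(a * Fx e p)^2/a8^2 + (b * Fy e p q)^2/b8^2 = 1" if "p^2+q^2=1" for p q
    using E8[OF that par(3) par(4) a b par(10) par(8) par(9)] unfolding Fx_def Fy_def a8_def b8_def .
  have "locus a b nagel_h = {P. (fst P)^2 / a8^2 + (snd P)^2 / b8^2 = 1}"
  proof (rule set_eqI, rule iffI)
    fix X assume "X \<in> locus a b nagel_h"
    then obtain P1 P2 P3 where X: "X = tri_center nagel_h P1 P2 P3" and T: "three_periodic a b P1 P2 P3"
      unfolding locus_def by blast
    have tc: "X = (a * Fx e (fst P1/a), b * Fy e (fst P1/a) (snd P1/b))"
      unfolding X e_def k_def d_def c2_def by (rule tp_center[OF b ab T])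
    have "on_ellipse a b P1" using T unfolding three_periodic_def by blast
    hence u: "(fst P1/a)^2 + (snd P1/b)^2 = 1" unfolding on_ellipse_def by (simp add: power_divide)
    show "X \<in> {P. (fst P)^2 / a8^2 + (snd P)^2 / b8^2 = 1}" using ell[OF u] unfolding tc by simp
  next
    fix X assume "X \<in> {P. (fst P)^2 / a8^2 + (snd P)^2 / b8^2 = 1}"
    hence XE: "(fst X)^2 / a8^2 + (snd X)^2 / b8^2 = 1" by simp
    define f where "f = (\<lambda>p. a * Fx e p)"
    have den: "(e-3)*(4*e*p^2-(1+e)^2) \<noteq> 0" if "p^2 \<le> 1" for p
    proof -
      have "4*e*p^2 \<le> 4*e" using that par(3) by simp
      moreover have "4*e - (1+e)^2 < 0"
      proof -
        have "4*e - (1+e)^2 = -((1-e)^2)" by (simp add: power2_eq_square algebra_simps)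
        thus ?thesis using par(4) by simp
      qed
      ultimately have "4*e*p^2-(1+e)^2 < 0" by linarith
      thus ?thesis using par(4) by simp
    qed
    have cont: "\<forall>x. -1 \<le> x \<and> x \<le> 1 \<longrightarrow> isCont f x"
    proof (intro allI impI)
      fix x :: real assume "-1 \<le> x \<and> x \<le> 1"
      hence "x^2 \<le> 1" by (simp add: abs_le_iff abs_square_le_1)
      hence "(e-3)*(4*e*x^2-(1+e)^2) \<noteq> 0" by (rule den)
      thus "isCont f x" unfolding f_def Fx_def by (intro continuous_intros) auto
    qed
    have f1: "f 1 = a8"
    proof -
      have d1: "4*e-(1+e)^2 = -((1-e)^2)" by (simp add: power2_eq_square algebra_simps)
      have n1: "4+(e+1)*(e-3) = (1-e)^2" by (simp add: power2_eq_square algebra_simps)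
      have "f 1 = a*(e*(e+1)*(1-e)^2/((e-3)*(-((1-e)^2))))" unfolding f_def Fx_def using d1 n1 by simp
      also have "\<dots> = a*e*(e+1)/(3-e)" using par(3) par(4) by (simp add: field_simps)
      also have "\<dots> = a8"
      proof -
        have h: "a*e*(e+1)*(4*a) = c2*(1+e)^2*(3-e)" using par(8) by algebra
        have "3 - e \<noteq> 0" "4*a \<noteq> 0" using par(4) a by auto
        thus ?thesis unfolding a8_def using h by (simp add: frac_eq_eq)
      qed
      finally show ?thesis .
    qed
    have fm1: "f (-1) = -a8" using f1 unfolding f_def Fx_def by simp
    have "(fst X)^2/a8^2 \<le> 1" using XE by (smt (verit) divide_nonneg_nonneg zero_le_power2)
    hence "(fst X)^2 \<le> a8^2" using a8p by (simp add: field_simps)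
    hence "\<bar>fst X\<bar> \<le> a8" using a8p by (metis abs_le_square_iff abs_of_pos)
    hence "f (-1) \<le> fst X" "fst X \<le> f 1" unfolding fm1 f1 by auto
    then obtain p where p: "-1 \<le> p" "p \<le> 1" "f p = fst X" using IVT[of f "-1" "fst X" 1] cont by auto
    have pp: "p^2 \<le> 1" using p by (simp add: abs_le_iff abs_square_le_1)
    define q0 where "q0 = sqrt (1 - p^2)"
    have u0: "p^2 + q0^2 = 1" unfolding q0_def using pp by simp
    have um: "p^2 + (-q0)^2 = 1" using u0 by simp
    have e1: "(fst X)^2/a8^2 + (b * Fy e p q0)^2/b8^2 = 1" using ell[OF u0] p(3) unfolding f_def by simp
    have "(b * Fy e p q0)^2/b8^2 = (snd X)^2/b8^2" using e1 XE by linarith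
    hence "(b * Fy e p q0)^2 = (snd X)^2" using b8p by simp
    hence "b * Fy e p q0 = snd X \<or> b * Fy e p q0 = - snd X" by (simp add: power2_eq_iff)
    then obtain q where u: "p^2+q^2 = 1" and qy: "b * Fy e p q = snd X"
    proof
      assume "b * Fy e p q0 = snd X" thus ?thesis using that u0 by blast
    next
      assume h: "b * Fy e p q0 = - snd X"
      have "b * Fy e p (-q0) = snd X" using h unfolding Fy_def by simp
      thus ?thesis using that um by blast
    qed
    obtain P1 P2 P3 where T: "three_periodic a b P1 P2 P3" and tc: "tri_center nagel_h P1 P2 P3 = (a * Fx e p, b * Fy e p q)"
      using construct[OF b ab u] unfolding e_def[symmetric] k_def[symmetric] d_def[symmetric] c2_def[symmetric] by blast
    have "X = tri_center nagel_h P1 P2 P3" unfolding tc using p(3) qy unfolding f_def by (simp add: prod_eq_iff)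
    thus "X \<in> locus a b nagel_h" unfolding locus_def using T by blast
  qed
  moreover have "a8 = (b^2 - d)^2 / (a * c2)" unfolding a8_def using par(6) by simp
  moreover have "b8 = (a^2 - d)^2 / (b * c2)" unfolding b8_def using par(7) by simp
  ultimately show ?thesis unfolding Let_def c2_def d_def by simp
qed


end
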